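(* Let $H$ be a multi-hypergraph, $\mathcal{M}$ a matroid and $\gamma\colon E(H)\to E(\mathcal{M})$. Let $M$ be a maximal independent matching in $(H,\gamma)$ of size $\ell$, and suppose there exists $e\in E(H)$ with $\gamma(e)\notin\mathrm{span}(\gamma(M))$. Then there exist an integer $k>0$ and a collection $X\subseteq E(H)$ of $k+1$ hyperedges such that the subhypergraph of $H$ formed by the hyperedges in $X$ and their vertices is connected, and $H-V(X)$ (with the labelling $\gamma$ restricted to its hyperedges) contains a maximal independent matching of size $\ell-k$.
   Context: A multi-hypergraph $H=(V,E)$ consists of a finite set $V$ and a multiset $E$ of non-empty subsets of $V$ (hyperedges); distinct copies of the same subset are distinct hyperedges and may receive different labels. For $U\subseteq V(H)$, $H-U$ has vertex set $V(H)\setminus U$ and all hyperedges of $H$ disjoint from $U$. For $X\subseteq E(H)$, $V(X)=\bigcup_{e\in X}e$. A multi-hypergraph is connected if for every partition of its vertex set into non-empty parts $A,B$ some hyperedge meets both $A$ and $B$. $\mathrm{span}$ denotes the closure operator of the matroid $\mathcal{M}$. Given $\gamma\colon E(H)\to E(\mathcal{M})$, an independent matching in $(H,\gamma)$ is a collection $M$ of pairwise vertex-disjoint hyperedges of $H$ with pairwise distinct labels such that $\gamma(M)$ is an independent set of $\mathcal{M}$ (the empty collection is an independent matching). An independent matching $M$ is inclusion-wise maximal if no independent matching $M'$ satisfies $M\subsetneq M'$. It is maximal if there is no independent matching $M'$ in $(H,\gamma)$ with $\mathrm{span}(\gamma(M'))=\mathrm{span}(\gamma(M))$ that is not inclusion-wise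 maximal. *)

theory Defs
  imports Main
begin

definition matroid :: "'m set \<Rightarrow> ('m set \<Rightarrow> bool) \<Rightarrow> bool" where
  "matroid G indep \<longleftrightarrow> finite G \<and> (\<forall>I. indep I \<longrightarrow> I \<subseteq> G) \<and> indep {} \<and>
     (\<forall>I J. indep J \<and> I \<subseteq> J \<longrightarrow> indep I) \<and>
     (\<forall>I J. indep I \<and> indep J \<and> card I < card J \<longrightarrow> (\<exists>x\<in>J - I. indep (insert x I)))"

definition span :: "'m set \<Rightarrow> ('m set \<Rightarrow> bool) \<Rightarrow> 'm set \<Rightarrow> 'm set" where
  "span G indep A = {x \<in> G. x \<in> A \<or> (\<exists>I\<subseteq>A. indep I \<and> \<not> indep (insert x I))}"

text \<open>Distinct identifiers with equal incidence sets model parallel copies.\<close>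
definition multi_hypergraph :: "'v set \<Rightarrow> 'e set \<Rightarrow> ('e \<Rightarrow> 'v set) \<Rightarrow> bool" where
  "multi_hypergraph V E inc \<longleftrightarrow> finite V \<and> finite E \<and> (\<forall>e\<in>E. inc e \<noteq> {} \<and> inc e \<subseteq> V)"

definition Vof :: "('e \<Rightarrow> 'v set) \<Rightarrow> 'e set \<Rightarrow> 'v set" where
  "Vof inc X = \<Union>(inc ` X)"

definition hdel_edges :: "'e set \<Rightarrow> ('e \<Rightarrow> 'v set) \<Rightarrow> 'v set \<Rightarrow> 'e set" where
  "hdel_edges E inc U = {e \<in> E. inc e \<inter> U = {}}"

definition hconnected :: "'v set \<Rightarrow> 'e set \<Rightarrow> ('e \<Rightarrow> 'v set) \<Rightarrow> bool" where
  "hconnected Vs X inc \<longleftrightarrow>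
     (\<forall>A B. A \<noteq> {} \<and> B \<noteq> {} \<and> A \<inter> B = {} \<and> A \<union> B = Vs \<longrightarrow>
        (\<exists>e\<in>X. inc e \<inter> A \<noteq> {} \<and> inc e \<inter> B \<noteq> {}))"

definition indep_matching ::
  "'e set \<Rightarrow> ('e \<Rightarrow> 'v set) \<Rightarrow> ('e \<Rightarrow> 'm) \<Rightarrow> ('m set \<Rightarrow> bool) \<Rightarrow> 'e set \<Rightarrow> bool" where
  "indep_matching E inc \<gamma> indep M \<longleftrightarrow>
     M \<subseteq> E \<and> (\<forall>e\<in>M. \<forall>f\<in>M. e \<noteq> f \<longrightarrow> inc e \<inter> inc f = {}) \<and>
     inj_on \<gamma> M \<and> indep (\<gamma> ` M)"

definition incl_max_indep_matching ::
  "'e set \<Rightarrow> ('e \<Rightarrow> 'v set) \<Rightarrow> ('e \<Rightarrow> 'm) \<Rightarrow> ('m set \<Rightarrow> bool) \<Rightarrow> 'e set \<Rightarrow> bool" where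
  "incl_max_indep_matching E inc \<gamma> indep M \<longleftrightarrow>
     indep_matching E inc \<gamma> indep M \<and>
     \<not> (\<exists>M'. indep_matching E inc \<gamma> indep M' \<and> M \<subset> M')"

definition max_indep_matching ::
  "'e set \<Rightarrow> ('e \<Rightarrow> 'v set) \<Rightarrow> ('e \<Rightarrow> 'm) \<Rightarrow> 'm set \<Rightarrow> ('m set \<Rightarrow> bool) \<Rightarrow> 'e set \<Rightarrow> bool" where
  "max_indep_matching E inc \<gamma> G indep M \<longleftrightarrow>
     indep_matching E inc \<gamma> indep M \<and>
     \<not> (\<exists>M'. indep_matching E inc \<gamma> indep M' \<and>
             span G indep (\<gamma> ` M') = span G indep (\<gamma> ` M) \<and>
             \<not> incl_max_indep_matching E inc \<gamma> indep M')"

end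

theory Submission
  imports Defs
begin


lemma m_sub: "matroid G indep \<Longrightarrow> indep I \<Longrightarrow> I \<subseteq> G"
  unfolding matroid_def by blast
lemma m_fin: "matroid G indep \<Longrightarrow> indep I \<Longrightarrow> finite I"
  using m_sub finite_subset unfolding matroid_def by metis
lemma m_her: "matroid G indep \<Longrightarrow> indep J \<Longrightarrow> I \<subseteq> J \<Longrightarrow> indep I"
  unfolding matroid_def by blast
lemma m_aug: "matroid G indep \<Longrightarrow> indep I \<Longrightarrow> indep J \<Longrightarrow> card I < card J \<Longrightarrow> \<exists>x\<in>J-I. indep (insert x I)"
  unfolding matroid_def by blast
lemma span_inc: "A \<subseteq> G \<Longrightarrow> A \<subseteq> span G indep A"
  unfolding span_def by blast
lemma span_mono: "A \<subseteq> B \<Longrightarrow> span G indep A \<subseteq> span G indep B"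
  unfolding span_def by blast
lemma span_dep: "matroid G indep \<Longrightarrow> indep I \<Longrightarrow> x \<in> span G indep I \<Longrightarrow> x \<notin> I \<Longrightarrow> \<not> indep (insert x I)"
proof
  assume m: "matroid G indep" and "indep I" "x \<in> span G indep I" "x \<notin> I" "indep (insert x I)"
  then obtain I' where "I' \<subseteq> I" "\<not> indep (insert x I')" unfolding span_def by blast
  moreover have "insert x I' \<subseteq> insert x I" using \<open>I' \<subseteq> I\<close> by blast
  ultimately show False using m_her[OF m \<open>indep (insert x I)\<close>] by blast
qed
lemma indep_ins: "x \<in> G \<Longrightarrow> x \<notin> span G indep A \<Longrightarrow> indep A \<Longrightarrow> indep (insert x A)"
  unfolding span_def by blast

lemma card_le_span: assumes m: "matroid G indep" and "indep A" "indep J" "A \<subseteq> span G indep J"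
  shows "card A \<le> card J"
proof (rule ccontr)
  assume "\<not> card A \<le> card J"
  then obtain x where "x \<in> A - J" "indep (insert x J)" using m_aug[OF m assms(3,2)] by auto
  thus False using span_dep[OF m assms(3)] assms(4) by blast
qed

lemma span_eq: assumes m: "matroid G indep" and I: "indep I" and J: "indep J" and c: "card I = card J"
  and s: "I \<subseteq> span G indep J" shows "span G indep I = span G indep J"
proof -
  have JG: "J \<subseteq> G" using m_sub[OF m J] .
  have IG: "I \<subseteq> G" using m_sub[OF m I] .
  have fI: "finite I" using m_fin[OF m I] .
  have fJ: "finite J" using m_fin[OF m J] .
  have JI: "J \<subseteq> span G indep I"
  proof
    fix y assume y: "y \<in> J"
    show "y \<in> span G indep I"
    proof (rule ccontr)
      assume ny: "y \<notin> span G indep I"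
      hence yI: "y \<notin> I" using span_inc[OF IG] by blast
      have "indep (insert y I)" using indep_ins[OF _ ny I] y JG by blast
      moreover have "insert y I \<subseteq> span G indep J" using s y span_inc[OF JG] by blast
      ultimately have "card (insert y I) \<le> card J" using card_le_span[OF m _ J] by blast
      thus False using c yI fI by simp
    qed
  qed
  have a: "span G indep J \<subseteq> span G indep I"
  proof
    fix x assume x: "x \<in> span G indep J"
    show "x \<in> span G indep I"
    proof (rule ccontr)
      assume nx: "x \<notin> span G indep I"
      hence xI: "x \<notin> I" using span_inc[OF IG] by blast
      have xG: "x \<in> G" using x unfolding span_def by blast
      have "indep (insert x I)" using indep_ins[OF xG nx I] .
      moreover have "insert x I \<subseteq> span G indep J" using s x by blast
      ultimately have "card (insert x I) \<le> card J" using card_le_span[OF m _ J] by blast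
      thus False using c xI fI by simp
    qed
  qed
  have b: "span G indep I \<subseteq> span G indep J"
  proof
    fix x assume x: "x \<in> span G indep I"
    show "x \<in> span G indep J"
    proof (rule ccontr)
      assume nx: "x \<notin> span G indep J"
      hence xJ: "x \<notin> J" using span_inc[OF JG] by blast
      have xG: "x \<in> G" using x unfolding span_def by blast
      have "indep (insert x J)" using indep_ins[OF xG nx J] .
      moreover have "insert x J \<subseteq> span G indep I" using JI x by blast
      ultimately have "card (insert x J) \<le> card I" using card_le_span[OF m _ I] by blast
      thus False using c xJ fJ by simp
    qed
  qed
  show ?thesis using a b by blast
qed

lemma aug_iter: assumes m: "matroid G indep"
  shows "indep I \<Longrightarrow> indep J \<Longrightarrow> card I \<le> card J \<Longrightarrow> \<exists>Z\<subseteq>J - I. indep (I \<union> Z) \<and> card (I \<union> Z) = card J"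
proof (induction "card J - card I" arbitrary: I)
  case 0
  then show ?case by (intro exI[of _ "{}"]) auto
next
  case (Suc n)
  then obtain x where x: "x \<in> J - I" "indep (insert x I)" using m_aug[OF m] by (metis less_eq_Suc_le not_less_eq_eq zero_less_Suc zero_less_diff)
  have fI: "finite I" using m_fin[OF m Suc.prems(1)] .
  have ci: "card (insert x I) = Suc (card I)" using x fI by simp
  have "n = card J - card (insert x I)" using Suc.hyps(2) ci by simp
  moreover have "card (insert x I) \<le> card J" using ci Suc.hyps(2) by simp
  ultimately obtain Z where Z: "Z \<subseteq> J - insert x I" "indep (insert x I \<union> Z)" "card (insert x I \<union> Z) = card J"
    using Suc.hyps(1) x(2) Suc.prems(2) by blast
  have e1: "I \<union> insert x Z = insert x I \<union> Z" by blast
  have e2: "insert x Z \<subseteq> J - I" using Z(1) x(1) by blast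
  show ?case using e1 e2 Z(2,3) by metis
qed


lemma dis_union:
  assumes "\<forall>x\<in>A. \<forall>y\<in>A. x \<noteq> y \<longrightarrow> inc x \<inter> inc y = {}"
    and "\<forall>x\<in>B. \<forall>y\<in>B. x \<noteq> y \<longrightarrow> inc x \<inter> inc y = {}"
    and "\<forall>x\<in>A. \<forall>y\<in>B. inc x \<inter> inc y = {}"
  shows "\<forall>x\<in>A \<union> B. \<forall>y\<in>A \<union> B. x \<noteq> y \<longrightarrow> inc x \<inter> inc y = {}"
proof (intro ballI impI)
  fix x y assume x: "x \<in> A \<union> B" and y: "y \<in> A \<union> B" and xy: "x \<noteq> y"
  show "inc x \<inter> inc y = {}"
  proof (cases "x \<in> A")
    case True
    show ?thesis
    proof (cases "y \<in> A")
      case True thus ?thesis using assms(1) \<open>x \<in> A\<close> xy by blast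
    next
      case False thus ?thesis using assms(3) \<open>x \<in> A\<close> y by blast
    qed
  next
    case False
    hence xB: "x \<in> B" using x by blast
    show ?thesis
    proof (cases "y \<in> A")
      case True
      hence "inc y \<inter> inc x = {}" using assms(3) xB by blast
      thus ?thesis by (simp add: Int_commute)
    next
      case False thus ?thesis using assms(2) xB y xy by blast
    qed
  qed
qed

theorem lemma1:
  fixes V :: "'v set" and E :: "'e set" and inc :: "'e \<Rightarrow> 'v set"
    and G :: "'m set" and indep :: "'m set \<Rightarrow> bool" and \<gamma> :: "'e \<Rightarrow> 'm"
    and M :: "'e set" and l :: nat and e :: 'e
  assumes "multi_hypergraph V E inc"
    and "matroid G indep"
    and "\<forall>f\<in>E. \<gamma> f \<in> G"
    and "max_indep_matching E inc \<gamma> G indep M"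
    and "card M = l"
    and "e \<in> E"
    and "\<gamma> e \<notin> span G indep (\<gamma> ` M)"
  shows "\<exists>k::nat. k > 0 \<and> (\<exists>X. X \<subseteq> E \<and> card X = k + 1 \<and> hconnected (Vof inc X) X inc \<and>
           (\<exists>M'. max_indep_matching (hdel_edges E inc (Vof inc X)) inc \<gamma> G indep M' \<and>
                 int (card M') = int l - int k))"
proof -
  note hg = assms(1) and m = assms(2) and \<gamma>G = assms(3) and Mmax = assms(4) and eE = assms(6) and ne = assms(7)
  have fE: "finite E" and incne: "\<And>f. f \<in> E \<Longrightarrow> inc f \<noteq> {}" using hg unfolding multi_hypergraph_def by auto
  define S where "S = span G indep (\<gamma> ` M)"
  define Ns where "Ns = {N. indep_matching E inc \<gamma> indep N \<and> span G indep (\<gamma> ` N) = S}"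
  define kf where "kf N = card {g\<in>N. inc g \<inter> inc e \<noteq> {}}" for N
  have MIM: "indep_matching E inc \<gamma> indep M" using Mmax unfolding max_indep_matching_def by blast
  have MNs: "M \<in> Ns" unfolding Ns_def S_def using MIM by blast
  have incl: "incl_max_indep_matching E inc \<gamma> indep N" if "N \<in> Ns" for N
    using Mmax that unfolding max_indep_matching_def Ns_def S_def by blast
  have cardNs: "card N = l" if N: "N \<in> Ns" for N
  proof -
    have NI: "indep_matching E inc \<gamma> indep N" and NS: "span G indep (\<gamma> ` N) = S" using N unfolding Ns_def by auto
    have i1: "indep (\<gamma> ` N)" and inj1: "inj_on \<gamma> N" and NE: "N \<subseteq> E" using NI unfolding indep_matching_def by auto
    have i2: "indep (\<gamma> ` M)" and inj2: "inj_on \<gamma> M" using MIM unfolding indep_matching_def by auto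
    have "\<gamma> ` N \<subseteq> span G indep (\<gamma> ` M)" using span_inc[OF m_sub[OF m i1]] NS S_def by blast
    hence a: "card (\<gamma> ` N) \<le> card (\<gamma> ` M)" using card_le_span[OF m i1 i2] by blast
    have "\<gamma> ` M \<subseteq> span G indep (\<gamma> ` N)" using span_inc[OF m_sub[OF m i2]] NS S_def by blast
    hence b: "card (\<gamma> ` M) \<le> card (\<gamma> ` N)" using card_le_span[OF m i2 i1] by blast
    show ?thesis using a b card_image[OF inj1] card_image[OF inj2] assms(5) by simp
  qed
  obtain N where N: "N \<in> Ns" and Nmin: "\<And>N'. N' \<in> Ns \<Longrightarrow> kf N \<le> kf N'"
    using ex_has_least_nat[of "\<lambda>N. N \<in> Ns" M kf] MNs by blast
  have NI: "indep_matching E inc \<gamma> indep N" and NS: "span G indep (\<gamma> ` N) = S" using N unfolding Ns_def by auto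
  have NE: "N \<subseteq> E" and Ndis: "\<And>g h. g \<in> N \<Longrightarrow> h \<in> N \<Longrightarrow> g \<noteq> h \<Longrightarrow> inc g \<inter> inc h = {}"
    and Ninj: "inj_on \<gamma> N" and Nind: "indep (\<gamma> ` N)" using NI unfolding indep_matching_def by auto
  have fN: "finite N" using NE fE finite_subset by blast
  have cN: "card N = l" using cardNs[OF N] .
  have NG: "\<gamma> ` N \<subseteq> G" using m_sub[OF m Nind] .
  have NsubS: "\<gamma> ` N \<subseteq> S" using span_inc[OF NG] NS by blast
  have eG: "\<gamma> e \<in> G" using \<gamma>G eE by blast
  have eS: "\<gamma> e \<notin> S" using ne S_def by blast
  have eN: "e \<notin> N" using eS NsubS by blast
  define D where "D = {g\<in>N. inc g \<inter> inc e \<noteq> {}}"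
  define k where "k = card D"
  define X where "X = insert e D"
  have DN: "D \<subseteq> N" unfolding D_def by blast
  have fD: "finite D" using fN DN finite_subset by blast
  have kN: "kf N = k" unfolding kf_def k_def D_def ..
  have kpos: "k > 0"
  proof (rule ccontr)
    assume "\<not> k > 0"
    hence "D = {}" using fD k_def by simp
    hence edis: "\<forall>g\<in>N. inc g \<inter> inc e = {}" unfolding D_def by blast
    have "indep_matching E inc \<gamma> indep (insert e N)"
      unfolding indep_matching_def
    proof (intro conjI)
      show "insert e N \<subseteq> E" using NE eE by blast
      show "\<forall>x\<in>insert e N. \<forall>y\<in>insert e N. x \<noteq> y \<longrightarrow> inc x \<inter> inc y = {}"
        using edis Ndis by blast
      show "inj_on \<gamma> (insert e N)" using Ninj eS NsubS by auto
      have eNS: "\<gamma> e \<notin> span G indep (\<gamma> ` N)" using eS NS by simp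
      show "indep (\<gamma> ` insert e N)" using indep_ins[OF eG eNS Nind] by simp
    qed
    moreover have "N \<subset> insert e N" using eN by blast
    ultimately show False using incl[OF N] unfolding incl_max_indep_matching_def by blast
  qed
  have XE: "X \<subseteq> E" unfolding X_def using eE DN NE by blast
  have cX: "card X = k + 1" unfolding X_def k_def using fD eN DN by (simp add: card_insert_if) blast
  have VX: "Vof inc X = inc e \<union> \<Union>(inc ` D)" unfolding Vof_def X_def by simp
  have hc: "hconnected (Vof inc X) X inc"
    unfolding hconnected_def
  proof (intro allI impI)
    fix A B assume AB: "A \<noteq> {} \<and> B \<noteq> {} \<and> A \<inter> B = {} \<and> A \<union> B = Vof inc X"
    show "\<exists>f\<in>X. inc f \<inter> A \<noteq> {} \<and> inc f \<inter> B \<noteq> {}"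
    proof (cases "inc e \<inter> A \<noteq> {} \<and> inc e \<inter> B \<noteq> {}")
      case True thus ?thesis unfolding X_def by blast
    next
      case False
      have ene: "inc e \<noteq> {}" using incne eE by blast
      have eV: "inc e \<subseteq> A \<union> B" using AB VX by blast
      show ?thesis
      proof (cases "inc e \<inter> A = {}")
        case True
        hence eB: "inc e \<subseteq> B" using eV by blast
        obtain v where v: "v \<in> A" using AB by blast
        have "v \<in> Vof inc X" using v AB by blast
        moreover have "v \<notin> inc e" using v True by blast
        ultimately obtain g where g: "g \<in> D" "v \<in> inc g" using VX by blast
        have "inc g \<inter> B \<noteq> {}" using g eB unfolding D_def by blast
        thus ?thesis using g v unfolding X_def by blast
      next
        case False
        hence eA: "inc e \<subseteq> A" using eV \<open>\<not> (inc e \<inter> A \<noteq> {} \<and> inc e \<inter> B \<noteq> {})\<close> by blast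
        obtain v where v: "v \<in> B" using AB by blast
        have "v \<in> Vof inc X" using v AB by blast
        moreover have "v \<notin> inc e" using v eA AB by blast
        ultimately obtain g where g: "g \<in> D" "v \<in> inc g" using VX by blast
        have "inc g \<inter> A \<noteq> {}" using g eA unfolding D_def by blast
        thus ?thesis using g v unfolding X_def by blast
      qed
    qed
  qed
  define E' where "E' = hdel_edges E inc (Vof inc X)"
  define M' where "M' = N - D"
  have cM': "card M' = l - k" unfolding M'_def k_def using cN card_Diff_subset[OF fD DN] by simp
  have kl: "k \<le> l" unfolding k_def using cN card_mono[OF fN DN] by simp
  have incD: "\<And>d. d \<in> D \<Longrightarrow> inc d \<subseteq> Vof inc X" unfolding Vof_def X_def by blast
  have ince: "inc e \<subseteq> Vof inc X" unfolding Vof_def X_def by blast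
  have M'E': "M' \<subseteq> E'"
  proof
    fix g assume g: "g \<in> M'"
    have "inc g \<inter> inc e = {}" using g unfolding M'_def D_def by blast
    moreover have "inc g \<inter> inc d = {}" if "d \<in> D" for d using Ndis[of g d] g that DN unfolding M'_def by blast
    ultimately show "g \<in> E'" using g NE unfolding E'_def hdel_edges_def VX M'_def by blast
  qed
  have M'I: "indep_matching E' inc \<gamma> indep M'"
    unfolding indep_matching_def
  proof (intro conjI)
    show "M' \<subseteq> E'" by (rule M'E')
    show "\<forall>x\<in>M'. \<forall>y\<in>M'. x \<noteq> y \<longrightarrow> inc x \<inter> inc y = {}" using Ndis unfolding M'_def by blast
    show "inj_on \<gamma> M'" unfolding M'_def by (rule inj_on_diff[OF Ninj])
    have "\<gamma> ` M' \<subseteq> \<gamma> ` N" unfolding M'_def by blast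
    thus "indep (\<gamma> ` M')" by (rule m_her[OF m Nind])
  qed
  have M'max: "max_indep_matching E' inc \<gamma> G indep M'"
    unfolding max_indep_matching_def
  proof (intro conjI notI)
    show "indep_matching E' inc \<gamma> indep M'" by (rule M'I)
    assume "\<exists>M''. indep_matching E' inc \<gamma> indep M'' \<and> span G indep (\<gamma> ` M'') = span G indep (\<gamma> ` M') \<and>
             \<not> incl_max_indep_matching E' inc \<gamma> indep M''"
    then obtain M'' where M''I: "indep_matching E' inc \<gamma> indep M''"
      and M''S: "span G indep (\<gamma> ` M'') = span G indep (\<gamma> ` M')"
      and M''n: "\<not> incl_max_indep_matching E' inc \<gamma> indep M''" by blast
    obtain M3 where M3I: "indep_matching E' inc \<gamma> indep M3" and M3s: "M'' \<subset> M3"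
      using M''I M''n unfolding incl_max_indep_matching_def by blast
    obtain f where f3: "f \<in> M3" and fM'': "f \<notin> M''" using M3s by blast
    have M''E': "M'' \<subseteq> E'" and M''dis: "\<And>g h. g \<in> M'' \<Longrightarrow> h \<in> M'' \<Longrightarrow> g \<noteq> h \<Longrightarrow> inc g \<inter> inc h = {}"
      and M''inj: "inj_on \<gamma> M''" and M''ind: "indep (\<gamma> ` M'')" using M''I unfolding indep_matching_def by auto
    have M3E': "M3 \<subseteq> E'" and M3dis: "\<And>g h. g \<in> M3 \<Longrightarrow> h \<in> M3 \<Longrightarrow> g \<noteq> h \<Longrightarrow> inc g \<inter> inc h = {}"
      and M3inj: "inj_on \<gamma> M3" and M3ind: "indep (\<gamma> ` M3)" using M3I unfolding indep_matching_def by auto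
    have M''E: "M'' \<subseteq> E" and M''X: "\<And>h. h \<in> M'' \<Longrightarrow> inc h \<inter> Vof inc X = {}"
      using M''E' unfolding E'_def hdel_edges_def by auto
    have fE: "f \<in> E" and fX: "inc f \<inter> Vof inc X = {}" using f3 M3E' unfolding E'_def hdel_edges_def by auto
    have fM''d: "\<And>h. h \<in> M'' \<Longrightarrow> inc f \<inter> inc h = {}" using M3dis f3 fM'' M3s by blast
    have fnD: "f \<notin> D" using fX incD incne[OF fE] by blast
    have M''D: "\<And>h d. h \<in> M'' \<Longrightarrow> d \<in> D \<Longrightarrow> inc h \<inter> inc d = {}" using M''X incD by blast
    have M''Dd: "M'' \<inter> D = {}" using M''D incne M''E by blast
    have fM''g: "\<gamma> f \<notin> \<gamma> ` M''" using M3inj f3 fM'' M3s using inj_on_image_mem_iff[OF M3inj f3, of M''] by blast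
    have "insert (\<gamma> f) (\<gamma> ` M'') \<subseteq> \<gamma> ` M3" using f3 M3s by blast
    hence indfM'': "indep (insert (\<gamma> f) (\<gamma> ` M''))" by (rule m_her[OF m M3ind])
    have fM''fin: "finite M''" using finite_subset[OF M''E \<open>finite E\<close>] .
    have M'ind: "indep (\<gamma> ` M')" using M'I unfolding indep_matching_def by blast
    have M'inj: "inj_on \<gamma> M'" using M'I unfolding indep_matching_def by blast
    have M''G: "\<gamma> ` M'' \<subseteq> G" using m_sub[OF m M''ind] .
    have M'G: "\<gamma> ` M' \<subseteq> G" using m_sub[OF m M'ind] .
    have M'spanM'': "\<gamma> ` M' \<subseteq> span G indep (\<gamma> ` M'')" using span_inc[OF M'G] M''S by blast
    have M''spanM': "\<gamma> ` M'' \<subseteq> span G indep (\<gamma> ` M')" using span_inc[OF M''G] M''S by blast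
    have cM'': "card M'' = l - k"
    proof -
      have "card (\<gamma> ` M') \<le> card (\<gamma> ` M'')" using card_le_span[OF m M'ind M''ind M'spanM''] .
      moreover have "card (\<gamma> ` M'') \<le> card (\<gamma> ` M')" using card_le_span[OF m M''ind M'ind M''spanM'] .
      ultimately show ?thesis using card_image[OF M'inj] card_image[OF M''inj] cM' by simp
    qed
    have M''S2: "\<gamma> ` M'' \<subseteq> S"
    proof -
      have "span G indep (\<gamma> ` M') \<subseteq> span G indep (\<gamma> ` N)" by (rule span_mono) (auto simp: M'_def)
      thus ?thesis using M''spanM' NS by blast
    qed
    have gN: "\<gamma> ` N = \<gamma> ` M' \<union> \<gamma> ` D" unfolding M'_def using DN by blast
    have cgD: "card (\<gamma> ` D) = k" unfolding k_def using inj_on_subset[OF Ninj DN] card_image by blast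
    have Zsub: "Z \<subseteq> \<gamma> ` D" if Z: "Z \<subseteq> \<gamma> ` N - P" "indep (P \<union> Z)" "\<gamma> ` M'' \<subseteq> P" for Z P
    proof
      fix z assume z: "z \<in> Z"
      show "z \<in> \<gamma> ` D"
      proof (rule ccontr)
        assume "z \<notin> \<gamma> ` D"
        hence zM': "z \<in> \<gamma> ` M'" using z Z(1) gN by blast
        have zn: "z \<notin> \<gamma> ` M''" using z Z by blast
        have "\<not> indep (insert z (\<gamma> ` M''))" using span_dep[OF m M''ind _ zn] zM' M'spanM'' by blast
        moreover have "insert z (\<gamma> ` M'') \<subseteq> P \<union> Z" using z Z(3) by blast
        ultimately show False using m_her[OF m Z(2)] by blast
      qed
    qed
    show False
    proof (cases "\<gamma> f \<in> S")
      case False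
      have "card (\<gamma> ` M'') \<le> card (\<gamma> ` N)" using card_image[OF M''inj] card_image[OF Ninj] cM'' cN by simp
      then obtain Z where Z: "Z \<subseteq> \<gamma> ` N - \<gamma> ` M''" "indep (\<gamma> ` M'' \<union> Z)" "card (\<gamma> ` M'' \<union> Z) = card (\<gamma> ` N)"
        using aug_iter[OF m M''ind Nind] by blast
      have ZD: "Z \<subseteq> \<gamma> ` D" using Zsub[OF Z(1,2)] by blast
      have fZ: "finite Z" using ZD fD finite_subset by blast
      have "card (\<gamma> ` M'' \<union> Z) = card (\<gamma> ` M'') + card Z" using Z(1) fZ fM''fin by (intro card_Un_disjoint) auto
      hence "card Z = k" using Z(3) card_image[OF M''inj] card_image[OF Ninj] cM'' cN kl by simp
      hence ZgD: "Z = \<gamma> ` D" using card_subset_eq[OF _ ZD] fD cgD by simp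
      define N1 where "N1 = M'' \<union> D"
      have gN1: "\<gamma> ` N1 = \<gamma> ` M'' \<union> Z" unfolding N1_def ZgD by blast
      have fN1: "finite N1" unfolding N1_def using fM''fin fD by blast
      have cN1: "card N1 = l" unfolding N1_def using card_Un_disjoint[OF fM''fin fD M''Dd] cM'' kl k_def by simp
      have "card (\<gamma> ` N1) = card N1" using gN1 Z(3) cN1 card_image[OF Ninj] cN by simp
      hence injN1: "inj_on \<gamma> N1" using inj_on_iff_eq_card[OF fN1, of \<gamma>] by blast
      have N1ind: "indep (\<gamma> ` N1)" using gN1 Z(2) by simp
      have N1E: "N1 \<subseteq> E" unfolding N1_def using M''E DN NE by blast
      have N1dis: "\<forall>x\<in>N1. \<forall>y\<in>N1. x \<noteq> y \<longrightarrow> inc x \<inter> inc y = {}"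
        unfolding N1_def
      proof (rule dis_union)
        show "\<forall>x\<in>M''. \<forall>y\<in>M''. x \<noteq> y \<longrightarrow> inc x \<inter> inc y = {}" using M''dis by blast
        show "\<forall>x\<in>D. \<forall>y\<in>D. x \<noteq> y \<longrightarrow> inc x \<inter> inc y = {}" using Ndis DN by blast
        show "\<forall>x\<in>M''. \<forall>y\<in>D. inc x \<inter> inc y = {}" using M''D by blast
      qed
      have DNg: "\<gamma> ` D \<subseteq> \<gamma> ` N" using DN by (rule image_mono)
      have "\<gamma> ` M'' \<union> Z \<subseteq> S" using M''S2 ZD DNg NsubS by blast
      hence N1sp: "\<gamma> ` N1 \<subseteq> span G indep (\<gamma> ` N)" by (simp add: gN1 NS)
      have N1S: "span G indep (\<gamma> ` N1) = S"
        using span_eq[OF m N1ind Nind _ N1sp] NS gN1 Z(3) by simp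
      have N1Ns: "N1 \<in> Ns" unfolding Ns_def indep_matching_def by (simp add: N1E N1dis injN1 N1ind N1S)
      have fN1n: "f \<notin> N1" unfolding N1_def using fM'' fnD by blast
      have fG: "\<gamma> f \<in> G" using \<gamma>G fE by blast
      have N1subS: "\<gamma> ` N1 \<subseteq> S" using span_inc[OF m_sub[OF m N1ind]] N1S by blast
      have "indep_matching E inc \<gamma> indep (insert f N1)"
        unfolding indep_matching_def
      proof (intro conjI)
        show "insert f N1 \<subseteq> E" using N1E fE by blast
        have fN1d: "\<forall>x\<in>{f}. \<forall>y\<in>N1. inc x \<inter> inc y = {}"
        proof (intro ballI)
          fix x y assume "x \<in> {f}" "y \<in> N1"
          thus "inc x \<inter> inc y = {}" unfolding N1_def using fM''d fX incD by blast
        qed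
        have "\<forall>x\<in>{f} \<union> N1. \<forall>y\<in>{f} \<union> N1. x \<noteq> y \<longrightarrow> inc x \<inter> inc y = {}"
          by (rule dis_union[OF _ N1dis fN1d]) blast
        thus "\<forall>x\<in>insert f N1. \<forall>y\<in>insert f N1. x \<noteq> y \<longrightarrow> inc x \<inter> inc y = {}" by simp
        show "inj_on \<gamma> (insert f N1)" using injN1 False N1subS by auto
        have fNS: "\<gamma> f \<notin> span G indep (\<gamma> ` N1)" using False N1S by simp
        show "indep (\<gamma> ` insert f N1)" using indep_ins[OF fG fNS N1ind] by simp
      qed
      moreover have "N1 \<subset> insert f N1" using fN1n by blast
      ultimately show False using incl[OF N1Ns] unfolding incl_max_indep_matching_def by blast
    next
      case True
      define B where "B = insert (\<gamma> f) (\<gamma> ` M'')"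
      have fB: "finite B" unfolding B_def using fM''fin by blast
      have cB: "card B = l - k + 1" unfolding B_def using fM''g fM''fin card_image[OF M''inj] cM'' by simp
      have "card B \<le> card (\<gamma> ` N)" using cB kpos kl card_image[OF Ninj] cN by simp
      then obtain Z where Z: "Z \<subseteq> \<gamma> ` N - B" "indep (B \<union> Z)" "card (B \<union> Z) = card (\<gamma> ` N)"
        using aug_iter[OF m _ Nind] indfM'' B_def by blast
      have ZD: "Z \<subseteq> \<gamma> ` D" using Zsub[OF Z(1,2)] B_def by blast
      have fZ: "finite Z" using ZD fD finite_subset by blast
      have "card (B \<union> Z) = card B + card Z" using Z(1) fZ fB by (intro card_Un_disjoint) auto
      hence cZ: "card Z = k - 1" using Z(3) cB card_image[OF Ninj] cN kl kpos by simp
      define Y where "Y = {d \<in> D. \<gamma> d \<in> Z}"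
      have YD: "Y \<subseteq> D" unfolding Y_def by blast
      have gY: "\<gamma> ` Y = Z" unfolding Y_def using ZD by blast
      have fY: "finite Y" using YD fD finite_subset by blast
      have cY: "card Y = k - 1" using card_image[OF inj_on_subset[OF Ninj]] YD DN gY cZ by (metis order_trans)
      define N3 where "N3 = insert f (M'' \<union> Y)"
      have gN3: "\<gamma> ` N3 = B \<union> Z" unfolding N3_def B_def gY[symmetric] by blast
      have fN3: "finite N3" unfolding N3_def using fM''fin fY by blast
      have M''Y: "M'' \<inter> Y = {}" using M''Dd YD by blast
      have fnMY: "f \<notin> M'' \<union> Y" using fM'' fnD YD by blast
      have cN3: "card N3 = l" unfolding N3_def
        using card_Un_disjoint[OF fM''fin fY M''Y] fnMY cM'' cY kl kpos fM''fin fY by simp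
      have "card (\<gamma> ` N3) = card N3" using gN3 Z(3) cN3 card_image[OF Ninj] cN by simp
      hence injN3: "inj_on \<gamma> N3" using inj_on_iff_eq_card[OF fN3, of \<gamma>] by blast
      have N3ind: "indep (\<gamma> ` N3)" using gN3 Z(2) by simp
      have N3E: "N3 \<subseteq> E" unfolding N3_def using M''E YD DN NE fE by blast
      have MYdis: "\<forall>x\<in>M'' \<union> Y. \<forall>y\<in>M'' \<union> Y. x \<noteq> y \<longrightarrow> inc x \<inter> inc y = {}"
      proof (rule dis_union)
        show "\<forall>x\<in>M''. \<forall>y\<in>M''. x \<noteq> y \<longrightarrow> inc x \<inter> inc y = {}" using M''dis by blast
        show "\<forall>x\<in>Y. \<forall>y\<in>Y. x \<noteq> y \<longrightarrow> inc x \<inter> inc y = {}" using Ndis DN YD by blast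
        show "\<forall>x\<in>M''. \<forall>y\<in>Y. inc x \<inter> inc y = {}" using M''D YD by blast
      qed
      have fMYd: "\<forall>x\<in>{f}. \<forall>y\<in>M'' \<union> Y. inc x \<inter> inc y = {}"
      proof (intro ballI)
        fix x y assume "x \<in> {f}" "y \<in> M'' \<union> Y"
        thus "inc x \<inter> inc y = {}" using fM''d fX incD YD by blast
      qed
      have "\<forall>x\<in>{f} \<union> (M'' \<union> Y). \<forall>y\<in>{f} \<union> (M'' \<union> Y). x \<noteq> y \<longrightarrow> inc x \<inter> inc y = {}"
        by (rule dis_union[OF _ MYdis fMYd]) blast
      hence N3dis: "\<forall>x\<in>N3. \<forall>y\<in>N3. x \<noteq> y \<longrightarrow> inc x \<inter> inc y = {}" unfolding N3_def by simp
      have DNg: "\<gamma> ` D \<subseteq> \<gamma> ` N" using DN by (rule image_mono)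
      have "B \<union> Z \<subseteq> S" unfolding B_def using M''S2 ZD DNg NsubS True by blast
      hence N3sp: "\<gamma> ` N3 \<subseteq> span G indep (\<gamma> ` N)" by (simp add: gN3 NS)
      have N3S: "span G indep (\<gamma> ` N3) = S"
        using span_eq[OF m N3ind Nind _ N3sp] NS gN3 Z(3) by simp
      have N3Ns: "N3 \<in> Ns" unfolding Ns_def indep_matching_def by (simp add: N3E N3dis injN3 N3ind N3S)
      have "{g\<in>N3. inc g \<inter> inc e \<noteq> {}} = Y"
        unfolding N3_def using YD fX ince M''X unfolding D_def by blast
      hence "kf N3 = k - 1" unfolding kf_def using cY by simp
      thus False using Nmin[OF N3Ns] kN kpos by simp
    qed
  qed
  show ?thesis
    using kpos XE cX hc M'max cM' kl unfolding E'_def by (intro exI[of _ k] conjI exI[of _ X] exI[of _ M']) auto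
qed

end
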